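(* Let $q$ be a prime power, $m\ge1$, and $f_1(t),\ldots,f_m(t)\in\mathbb{F}_q[t]$ pairwise coprime monic irreducible polynomials. Let $R=\mathbb{F}_q[t]$ or $R=\mathbb{F}_q[t,f_1(t)^{-1},\ldots,f_m(t)^{-1}]$. Then there exists a non-unit $x\in R$ that is transcendental over $\mathbb{F}_q$ and satisfies $\sigma(x)=x$ for every ring automorphism $\sigma$ of $R$. *)

theory Defs
  imports "HOL-Computational_Algebra.Polynomial" "HOL-Computational_Algebra.Fraction_Field"
    "HOL-Computational_Algebra.Polynomial_Factorial"
begin

text \<open>We work inside the fraction field Frac(F_q[t]) of the polynomial ring over a
finite field 'a (so q = CARD('a), automatically a prime power).\<close>

definition poly_emb :: "'a::idom poly \<Rightarrow> 'a poly fract" where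
  "poly_emb p = Fract p 1"

definition poly_ring :: "'a::idom poly fract set" where
  "poly_ring = {poly_emb p | p. True}"

definition loc_ring :: "(nat \<Rightarrow> 'a::idom poly) \<Rightarrow> nat \<Rightarrow> 'a poly fract set" where
  "loc_ring f m = {Fract p ((\<Prod>i<m. f i) ^ n) | p n. True}"

definition ring_aut_on :: "'b::ring_1 set \<Rightarrow> ('b \<Rightarrow> 'b) \<Rightarrow> bool" where
  "ring_aut_on S \<sigma> \<longleftrightarrow> bij_betw \<sigma> S S \<and> \<sigma> 1 = 1 \<and>
     (\<forall>a\<in>S. \<forall>b\<in>S. \<sigma> (a + b) = \<sigma> a + \<sigma> b \<and> \<sigma> (a * b) = \<sigma> a * \<sigma> b)"

definition unit_in :: "'b::ring_1 set \<Rightarrow> 'b \<Rightarrow> bool" where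
  "unit_in S x \<longleftrightarrow> (\<exists>y\<in>S. x * y = 1)"

definition transcendental_Fq :: "'a::idom poly fract \<Rightarrow> bool" where
  "transcendental_Fq x \<longleftrightarrow>
     (\<forall>p :: 'a poly. p \<noteq> 0 \<longrightarrow> poly (map_poly (\<lambda>c. poly_emb [:c:]) p) x \<noteq> 0)"

end

theory Submission
  imports Defs
begin

definition Cc :: "'a::field \<Rightarrow> 'a poly fract" where "Cc c = poly_emb [:c:]"

lemma E_add[simp]: "poly_emb (p + q) = poly_emb p + poly_emb q"
  by (simp add: poly_emb_def)
lemma E_mult[simp]: "poly_emb (p * q) = poly_emb p * poly_emb q"
  by (simp add: poly_emb_def)
lemma E_0[simp]: "poly_emb 0 = 0"
  by (simp add: poly_emb_def fract_collapse)
lemma E_1[simp]: "poly_emb 1 = 1"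
  by (simp add: poly_emb_def fract_collapse)
lemma E_minus[simp]: "poly_emb (- p) = - poly_emb p"
  by (simp add: poly_emb_def)
lemma E_diff[simp]: "poly_emb (p - q) = poly_emb p - poly_emb q"
  by (simp add: poly_emb_def)
lemma E_power[simp]: "poly_emb (p ^ n) = poly_emb p ^ n"
  by (induct n) auto
lemma E_sum: "poly_emb (\<Sum>i\<in>A. f i) = (\<Sum>i\<in>A. poly_emb (f i))"
  by (induct A rule: infinite_finite_induct) auto
lemma E_prod: "poly_emb (\<Prod>i\<in>A. f i) = (\<Prod>i\<in>A. poly_emb (f i))"
  by (induct A rule: infinite_finite_induct) auto
lemma E_inj[simp]: "poly_emb p = poly_emb q \<longleftrightarrow> p = q"
  by (simp add: poly_emb_def eq_fract)
lemma E_eq_0[simp]: "poly_emb p = 0 \<longleftrightarrow> p = 0"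
  using E_inj[of p 0] by simp
lemma Fract_div: "b \<noteq> 0 \<Longrightarrow> Fract a b = poly_emb a / poly_emb b"
  by (simp add: poly_emb_def)

lemma Cc_add[simp]: "Cc (a + b) = Cc a + Cc b" by (simp add: Cc_def flip: E_add)
lemma Cc_mult[simp]: "Cc (a * b) = Cc a * Cc b" by (simp add: Cc_def flip: E_mult)
lemma Cc_0[simp]: "Cc 0 = 0" by (simp add: Cc_def)
lemma Cc_1[simp]: "Cc 1 = 1" by (metis Cc_def E_1 one_pCons)
lemma Cc_inj[simp]: "Cc a = Cc b \<longleftrightarrow> a = b" by (simp add: Cc_def)
lemma Cc_eq_0[simp]: "Cc a = 0 \<longleftrightarrow> a = 0" using Cc_inj[of a 0] by simp
lemma Cc_minus[simp]: "Cc (- a) = - Cc a" by (simp add: Cc_def flip: E_minus)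
lemma Cc_power[simp]: "Cc (a ^ n) = Cc a ^ n" by (induct n) auto
lemma Cc_inverse: "Cc (inverse a) = inverse (Cc a)"
  by (cases "a = 0") (auto simp: field_simps simp flip: Cc_mult)
lemma Cc_E_smult: "Cc c * poly_emb p = poly_emb (smult c p)"
  by (simp add: Cc_def flip: E_mult)

definition ev :: "'a::field poly \<Rightarrow> 'a poly fract \<Rightarrow> 'a poly fract" where
  "ev P x = poly (map_poly Cc P) x"

lemma ev_pCons[simp]: "ev (pCons a P) x = Cc a + x * ev P x"
  by (simp add: ev_def map_poly_pCons)
lemma ev_0[simp]: "ev 0 x = 0" by (simp add: ev_def)
lemma ev_const[simp]: "ev [:c:] x = Cc c" by simp
lemma map_Cc_add: "map_poly Cc (P + Q) = map_poly Cc P + map_poly Cc Q"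
  by (rule poly_eqI) (simp add: coeff_map_poly)
lemma ev_add[simp]: "ev (P + Q) x = ev P x + ev Q x"
  by (simp add: ev_def map_Cc_add)
lemma ev_smult[simp]: "ev (smult c P) x = Cc c * ev P x"
  by (induct P) (simp_all add: algebra_simps)
lemma ev_mult[simp]: "ev (P * Q) x = ev P x * ev Q x"
  by (induct P) (simp_all add: algebra_simps)
lemma ev_minus[simp]: "ev (- P) x = - ev P x"
  using ev_add[of P "-P" x] by (simp add: eq_neg_iff_add_eq_0 add.commute)
lemma ev_diff[simp]: "ev (P - Q) x = ev P x - ev Q x"
  using ev_add[of P "-Q" x] by simp
lemma ev_one[simp]: "ev 1 x = 1" by (simp add: ev_def map_poly_1')
lemma ev_power[simp]: "ev (P ^ n) x = ev P x ^ n"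
  by (induct n) simp_all

lemma ev_altdef:
  assumes "degree P \<le> N"
  shows "ev P x = (\<Sum>i\<le>N. Cc (coeff P i) * x ^ i)"
  using assms
proof (induct P arbitrary: N)
  case 0 then show ?case by simp
next
  case (pCons a P)
  show ?case
  proof (cases N)
    case 0
    with pCons have "P = 0" by (auto split: if_splits)
    with 0 show ?thesis by simp
  next
    case (Suc M)
    with pCons have "degree P \<le> M" by (auto split: if_splits)
    with pCons have "ev P x = (\<Sum>i\<le>M. Cc (coeff P i) * x ^ i)" by blast
    have "(\<Sum>i\<le>N. Cc (coeff (pCons a P) i) * x ^ i) = Cc a + x * (\<Sum>i\<le>M. Cc (coeff P i) * x ^ i)"
      unfolding Suc by (subst sum.atMost_Suc_shift) (simp add: sum_distrib_left mult_ac)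
    then show ?thesis using \<open>ev P x = _\<close> by simp
  qed
qed

definition hom :: "nat \<Rightarrow> 'a::field poly \<Rightarrow> 'a poly \<Rightarrow> 'a poly \<Rightarrow> 'a poly" where
  "hom N P a b = (\<Sum>i\<le>N. smult (coeff P i) (a ^ i * b ^ (N - i)))"

lemma hom_ev:
  assumes "b \<noteq> 0" "degree P \<le> N"
  shows "poly_emb (hom N P a b) = ev P (Fract a b) * poly_emb b ^ N"
proof -
  have Eb: "poly_emb b \<noteq> 0" using assms by simp
  have "ev P (Fract a b) * poly_emb b ^ N = (\<Sum>i\<le>N. Cc (coeff P i) * Fract a b ^ i * poly_emb b ^ N)"
    by (simp add: ev_altdef[OF assms(2)] sum_distrib_right)
  also have "\<dots> = (\<Sum>i\<le>N. poly_emb (smult (coeff P i) (a ^ i * b ^ (N - i))))"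
  proof (rule sum.cong[OF refl])
    fix i assume "i \<in> {..N}"
    then have i: "N = i + (N - i)" by simp
    have "Cc (coeff P i) * Fract a b ^ i * poly_emb b ^ N
        = Cc (coeff P i) * (poly_emb a / poly_emb b) ^ i * (poly_emb b ^ i * poly_emb b ^ (N - i))"
      by (subst i, subst power_add) (simp add: Fract_div assms)
    also have "\<dots> = Cc (coeff P i) * (poly_emb a ^ i * poly_emb b ^ (N - i))"
      using Eb by (simp add: power_divide field_simps)
    also have "\<dots> = poly_emb (smult (coeff P i) (a ^ i * b ^ (N - i)))"
      by (simp flip: Cc_E_smult)
    finally show "Cc (coeff P i) * Fract a b ^ i * poly_emb b ^ N = poly_emb (smult (coeff P i) (a ^ i * b ^ (N - i)))" .
  qed
  also have "\<dots> = poly_emb (hom N P a b)" by (simp add: hom_def E_sum)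
  finally show ?thesis ..
qed

lemma hom_bezout:
  assumes "U * G + V * H = 1" "b \<noteq> 0" "degree G \<le> N" "degree H \<le> N" "degree U \<le> M" "degree V \<le> M"
  shows "hom M U a b * hom N G a b + hom M V a b * hom N H a b = b ^ (M + N)"
proof -
  have e: "ev U (Fract a b) * ev G (Fract a b) + ev V (Fract a b) * ev H (Fract a b) = 1"
    using arg_cong[OF assms(1), of "\<lambda>p. ev p (Fract a b)"] by simp
  have "poly_emb (hom M U a b * hom N G a b + hom M V a b * hom N H a b)
     = (ev U (Fract a b) * ev G (Fract a b) + ev V (Fract a b) * ev H (Fract a b)) * poly_emb b ^ (M + N)"
    using assms by (simp add: hom_ev power_add algebra_simps)
  also have "\<dots> = poly_emb (b ^ (M + N))" by (simp add: e)
  finally show ?thesis by (metis E_add E_mult E_power E_inj)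
qed

lemma hom_split:
  "b dvd (hom N P a b - smult (coeff P N) (a ^ N))"
proof -
  have "hom N P a b = (\<Sum>i<N. smult (coeff P i) (a ^ i * b ^ (N - i))) + smult (coeff P N) (a ^ N)"
    unfolding hom_def by (simp add: lessThan_Suc_atMost[symmetric])
  moreover have "b dvd (\<Sum>i<N. smult (coeff P i) (a ^ i * b ^ (N - i)))"
  proof (rule dvd_sum)
    fix i assume "i \<in> {..<N}"
    then have "N - i = Suc (N - i - 1)" by simp
    then show "b dvd smult (coeff P i) (a ^ i * b ^ (N - i))"
      by (metis dvd_mult dvd_smult dvd_triv_left power_Suc)
  qed
  ultimately show ?thesis by simp
qed

lemma pw_lemma:
  fixes a b :: "'b::comm_ring_1"
  assumes "\<alpha> * a + \<beta> * b = 1"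
  shows "\<exists>Y. (\<beta> * b) ^ k + a * Y = 1"
proof (induct k)
  case 0 show ?case by (rule exI[of _ 0]) simp
next
  case (Suc k)
  then obtain Y where Y: "(\<beta> * b) ^ k + a * Y = 1" by blast
  have Y': "(\<beta> * b) ^ k = 1 - a * Y" by (metis Y add_diff_cancel_right')
  have "(\<beta> * b) ^ Suc k = \<beta> * b * (1 - a * Y)" by (simp only: power_Suc Y')
  also have "\<dots> = \<beta> * b - a * (Y * \<beta> * b)" by (simp add: algebra_simps)
  also have "\<dots> = (1 - \<alpha> * a) - a * (Y * \<beta> * b)"
    using assms by (metis add_diff_cancel_left')
  also have "\<dots> = 1 - a * (\<alpha> + Y * \<beta> * b)" by (simp add: algebra_simps)
  finally show ?case by (intro exI[of _ "\<alpha> + Y * \<beta> * b"]) simp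
qed

lemma poly_bezout:
  fixes P Q :: "'a::field poly"
  assumes "coprime P Q"
  shows "\<exists>U V. U * P + V * Q = 1"
proof -
  define S where "S = {n. \<exists>U V. U * P + V * Q \<noteq> 0 \<and> degree (U * P + V * Q) = n}"
  have "P \<noteq> 0 \<or> Q \<noteq> 0"
  proof (rule ccontr)
    assume "\<not> (P \<noteq> 0 \<or> Q \<noteq> 0)"
    then have "P = 0" "Q = 0" by simp_all
    with assms show False by simp
  qed
  then have "S \<noteq> {}"
  proof
    assume "P \<noteq> 0"
    then have "degree P \<in> S" unfolding S_def by (intro CollectI exI[of _ 1] exI[of _ 0]) simp
    then show ?thesis by blast
  next
    assume "Q \<noteq> 0"
    then have "degree Q \<in> S" unfolding S_def by (intro CollectI exI[of _ 0] exI[of _ 1]) simp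
    then show ?thesis by blast
  qed
  then obtain n where "n \<in> S" by blast
  define d where "d = (LEAST n. n \<in> S)"
  have "d \<in> S" unfolding d_def by (rule LeastI) fact
  then obtain U V where UV: "U * P + V * Q \<noteq> 0" "degree (U * P + V * Q) = d"
    unfolding S_def by blast
  define D where "D = U * P + V * Q"
  have minimal: "degree (X * P + Y * Q) \<ge> d" if "X * P + Y * Q \<noteq> 0" for X Y
    using that unfolding d_def S_def by (intro Least_le) blast
  have dv: "D dvd Z" if "Z = X * P + Y * Q" for Z X Y
  proof (rule ccontr)
    assume nd: "\<not> D dvd Z"
    have D0: "D \<noteq> 0" using UV D_def by simp
    have "Z mod D \<noteq> 0" using nd by (simp add: mod_eq_0_iff_dvd)
    then have lt: "degree (Z mod D) < degree D" using D0 by (simp add: degree_mod_less')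
    define q where "q = Z div D"
    have "Z mod D = Z - q * D" unfolding q_def by (rule minus_div_mult_eq_mod[symmetric])
    also have "\<dots> = (X - q * U) * P + (Y - q * V) * Q"
      unfolding that D_def by (simp add: algebra_simps)
    finally have "Z mod D = (X - q * U) * P + (Y - q * V) * Q" .
    with minimal[of "X - q * U" "Y - q * V"] \<open>Z mod D \<noteq> 0\<close>
    have "degree (Z mod D) \<ge> d" by simp
    with lt UV D_def show False by simp
  qed
  have "D dvd P" by (rule dv[of P 1 0]) simp
  moreover have "D dvd Q" by (rule dv[of Q 0 1]) simp
  ultimately have "is_unit D" using assms coprime_common_divisor by blast
  have D0: "D \<noteq> 0" using UV D_def by simp
  with \<open>is_unit D\<close> have "degree D = 0" using is_unit_iff_degree by blast
  then obtain c where c1: "D = [:c:]" by (rule degree_eq_zeroE)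
  with D0 have c: "D = [:c:]" "c \<noteq> 0" by auto
  have "smult (inverse c) U * P + smult (inverse c) V * Q = smult (inverse c) D"
    by (simp add: D_def smult_add_right)
  also have "\<dots> = 1" using c by simp
  finally show ?thesis by blast
qed

lemma coprime_rep:
  fixes z :: "'a::field poly fract"
  shows "\<exists>a b. z = Fract a b \<and> b \<noteq> 0 \<and> coprime a b"
proof -
  define S where "S = {n. \<exists>a b. z = Fract a b \<and> b \<noteq> 0 \<and> degree b = n}"
  obtain a0 b0 where "z = Fract a0 b0" "b0 \<noteq> 0" by (cases z) auto
  then have "degree b0 \<in> S" unfolding S_def by blast
  define d where "d = (LEAST n. n \<in> S)"
  have "d \<in> S" unfolding d_def by (rule LeastI) fact
  then obtain a b where ab: "z = Fract a b" "b \<noteq> 0" "degree b = d" unfolding S_def by blast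
  have minimal: "degree b' \<ge> d" if "z = Fract a' b'" "b' \<noteq> 0" for a' b'
    using that unfolding d_def S_def by (intro Least_le) blast
  have "coprime a b"
  proof (rule coprimeI)
    fix c assume ca: "c dvd a" and cb: "c dvd b"
    show "is_unit c"
    proof (rule ccontr)
      assume nu: "\<not> is_unit c"
      obtain a' where a': "a = c * a'" using ca by blast
      obtain b' where b': "b = c * b'" using cb by blast
      have c0: "c \<noteq> 0" "b' \<noteq> 0" using ab b' by auto
      have "degree c > 0" using nu c0 is_unit_iff_degree by blast
      then have "degree b' < degree b" using b' c0 by (simp add: degree_mult_eq)
      moreover have "z = Fract a' b'" using ab a' b' c0 by (simp add: mult_fract_cancel)
      ultimately show False using minimal[of a' b'] c0 ab by simp
    qed
  qed
  with ab show ?thesis by blast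
qed

lemma poly_sum_le:
  fixes P :: "'a::comm_ring_1 poly"
  assumes "degree P \<le> N"
  shows "poly P x = (\<Sum>i\<le>N. coeff P i * x ^ i)"
proof -
  have "poly P x = (\<Sum>i\<le>degree P. coeff P i * x ^ i)" by (rule poly_altdef)
  also have "\<dots> = (\<Sum>i\<le>N. coeff P i * x ^ i)"
    by (rule sum.mono_neutral_left) (use assms in \<open>auto simp: coeff_eq_0\<close>)
  finally show ?thesis .
qed

lemma coeff_hom: "coeff (hom N P a b) k = (\<Sum>i\<le>N. coeff P i * coeff (a ^ i * b ^ (N - i)) k)"
  by (simp add: hom_def coeff_sum)

lemma deg_lemma:
  fixes a b G H :: "'a::field poly"
  assumes ab: "coprime a b" "b \<noteq> 0" and GH: "coprime G H"
    and N: "N = max (degree G) (degree H)" "N \<ge> 1"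
    and dG: "degree (hom N G a b) \<le> 1" and dH: "degree (hom N H a b) \<le> 1"
  shows "degree a \<le> 1 \<and> degree b \<le> 1"
proof (rule ccontr)
  assume "\<not> ?thesis"
  then have e2: "max (degree a) (degree b) \<ge> 2" by auto
  have big: "N * k \<le> 1" if "P \<in> {G, H}" "coeff (hom N P a b) (N * k) \<noteq> 0" for P k
  proof -
    have "N * k \<le> degree (hom N P a b)" using that(2) by (rule le_degree)
    then show ?thesis using that(1) dG dH by auto
  qed
  have root: "\<exists>P\<in>{G, H}. poly P \<rho> \<noteq> 0" for \<rho>
  proof (rule ccontr)
    assume "\<not> ?thesis"
    then have "[:-\<rho>, 1:] dvd G" "[:-\<rho>, 1:] dvd H" by (auto simp: poly_eq_0_iff_dvd)
    then have "is_unit [:-\<rho>, 1:]" using GH coprime_common_divisor by blast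
    then show False by (simp add: is_unit_poly_iff)
  qed
  have a0: "a \<noteq> 0"
  proof
    assume "a = 0"
    then have "is_unit b" using ab by simp
    then have "degree b = 0" using ab(2) is_unit_iff_degree by blast
    with \<open>a = 0\<close> e2 show False by simp
  qed
  have dprod: "degree (a ^ i * b ^ (N - i)) = i * degree a + (N - i) * degree b" for i
    using a0 ab(2) by (simp add: degree_mult_eq degree_power_eq)
  have lprod: "lead_coeff (a ^ i * b ^ (N - i)) = lead_coeff a ^ i * lead_coeff b ^ (N - i)" for i
    by (simp add: lead_coeff_mult lead_coeff_power)
  consider (gt) "degree a > degree b" | (lt) "degree a < degree b" | (eq) "degree a = degree b"
    by linarith
  then show False
  proof cases
    case gt
    obtain P where P: "P \<in> {G, H}" "degree P = N" using N by (cases "degree G \<le> degree H") auto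
    have P0: "P \<noteq> 0" using P N by auto
    have "coeff (hom N P a b) (N * degree a) = coeff P N * coeff (a ^ N * b ^ (N - N)) (N * degree a)"
      unfolding coeff_hom
    proof -
      have rest: "(\<Sum>i\<in>{..N} - {N}. coeff P i * coeff (a ^ i * b ^ (N - i)) (N * degree a)) = 0"
      proof (rule sum.neutral, rule ballI)
        fix i assume "i \<in> {..N} - {N}"
        then have "i < N" by auto
        have "(N - i) * degree b < (N - i) * degree a" using gt \<open>i < N\<close> by simp
        then have "degree (a ^ i * b ^ (N - i)) < N * degree a"
        proof -
          have "i * degree a + (N - i) * degree a = N * degree a"
            using \<open>i < N\<close> by (simp flip: add_mult_distrib)
          then show ?thesis unfolding dprod using \<open>(N - i) * degree b < (N - i) * degree a\<close> by linarith
        qed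
        then show "coeff P i * coeff (a ^ i * b ^ (N - i)) (N * degree a) = 0"
          by (simp add: coeff_eq_0)
      qed
      have "(\<Sum>i\<le>N. coeff P i * coeff (a ^ i * b ^ (N - i)) (N * degree a)) = coeff P N * coeff (a ^ N * b ^ (N - N)) (N * degree a) + (\<Sum>i\<in>{..N} - {N}. coeff P i * coeff (a ^ i * b ^ (N - i)) (N * degree a))"
        by (rule sum.remove) auto
      then show "(\<Sum>i\<le>N. coeff P i * coeff (a ^ i * b ^ (N - i)) (N * degree a)) = coeff P N * coeff (a ^ N * b ^ (N - N)) (N * degree a)"
        using rest by simp
    qed
    also have "\<dots> = coeff P N * lead_coeff a ^ N"
      using dprod[of N] lprod[of N] by simp
    moreover have "coeff P N \<noteq> 0" using P(2) P0 by (metis leading_coeff_0_iff)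
    ultimately have "coeff (hom N P a b) (N * degree a) \<noteq> 0"
      using a0 by simp
    then have "N * degree a \<le> 1" using big P(1) by blast
    moreover have "N * degree a \<ge> 2" using N(2) e2 gt
      by (metis dual_order.trans less_imp_le_nat max.absorb1 mult_le_mono1 mult_1)
    ultimately show False by simp
  next
    case lt
    obtain P where P: "P \<in> {G, H}" "poly P 0 \<noteq> 0" using root by blast
    have "coeff (hom N P a b) (N * degree b) = coeff P 0 * coeff (a ^ 0 * b ^ (N - 0)) (N * degree b)"
      unfolding coeff_hom
    proof -
      have rest: "(\<Sum>i\<in>{..N} - {0}. coeff P i * coeff (a ^ i * b ^ (N - i)) (N * degree b)) = 0"
      proof (rule sum.neutral, rule ballI)
        fix i assume "i \<in> {..N} - {0}"
        then have "0 < i" "i \<le> N" by auto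
        have "i * degree a < i * degree b" using lt \<open>0 < i\<close> by simp
        then have "degree (a ^ i * b ^ (N - i)) < N * degree b"
        proof -
          have "i * degree b + (N - i) * degree b = N * degree b"
            using \<open>i \<le> N\<close> by (simp flip: add_mult_distrib)
          then show ?thesis unfolding dprod using \<open>i * degree a < i * degree b\<close> by linarith
        qed
        then show "coeff P i * coeff (a ^ i * b ^ (N - i)) (N * degree b) = 0"
          by (simp add: coeff_eq_0)
      qed
      have "(\<Sum>i\<le>N. coeff P i * coeff (a ^ i * b ^ (N - i)) (N * degree b)) = coeff P 0 * coeff (a ^ 0 * b ^ (N - 0)) (N * degree b) + (\<Sum>i\<in>{..N} - {0}. coeff P i * coeff (a ^ i * b ^ (N - i)) (N * degree b))"
        by (rule sum.remove) auto
      then show "(\<Sum>i\<le>N. coeff P i * coeff (a ^ i * b ^ (N - i)) (N * degree b)) = coeff P 0 * coeff (a ^ 0 * b ^ (N - 0)) (N * degree b)"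
        using rest by simp
    qed
    also have "\<dots> = coeff P 0 * lead_coeff b ^ N"
      using dprod[of 0] lprod[of 0] by simp
    finally have "coeff (hom N P a b) (N * degree b) \<noteq> 0"
      using P ab(2) by (simp add: poly_0_coeff_0)
    then have "N * degree b \<le> 1" using big P(1) by blast
    moreover have "N * degree b \<ge> 2" using N(2) e2 lt
      by (metis dual_order.trans less_imp_le_nat max.absorb2 mult_le_mono1 mult_1)
    ultimately show False by simp
  next
    case eq
    define \<rho> where "\<rho> = lead_coeff a / lead_coeff b"
    obtain P where P: "P \<in> {G, H}" "poly P \<rho> \<noteq> 0" using root by blast
    have degP: "degree P \<le> N" using P N by auto
    have lb: "lead_coeff b \<noteq> 0" using ab by simp
    have "coeff (hom N P a b) (N * degree a) = (\<Sum>i\<le>N. coeff P i * (lead_coeff a ^ i * lead_coeff b ^ (N - i)))"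
      unfolding coeff_hom
    proof (rule sum.cong[OF refl])
      fix i assume "i \<in> {..N}"
      then have "degree (a ^ i * b ^ (N - i)) = N * degree a"
        unfolding dprod eq by (simp add: add_mult_distrib[symmetric])
      then show "coeff P i * coeff (a ^ i * b ^ (N - i)) (N * degree a) = coeff P i * (lead_coeff a ^ i * lead_coeff b ^ (N - i))"
        using lprod[of i] by metis
    qed
    also have "\<dots> = lead_coeff b ^ N * poly P \<rho>"
      unfolding poly_sum_le[OF degP] sum_distrib_left
    proof (rule sum.cong[OF refl])
      fix i assume "i \<in> {..N}"
      then have "lead_coeff b ^ N = lead_coeff b ^ i * lead_coeff b ^ (N - i)"
        by (simp flip: power_add)
      then show "coeff P i * (lead_coeff a ^ i * lead_coeff b ^ (N - i)) = lead_coeff b ^ N * (coeff P i * \<rho> ^ i)"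
        using lb by (simp add: \<rho>_def power_divide field_simps)
    qed
    finally have "coeff (hom N P a b) (N * degree a) \<noteq> 0" using P lb by simp
    then have "N * degree a \<le> 1" using big P(1) by blast
    moreover have "N * degree a \<ge> 2" using N(2) e2 eq
      by (metis max.idem mult_le_mono1 mult_1 order_trans)
    ultimately show False by simp
  qed
qed

lemma key_lemma:
  fixes s :: "'a::field poly fract" and G0 H0 :: "'a poly"
  assumes "ev G0 s \<noteq> 0" "poly_emb [:0,1:] * ev G0 s = ev H0 s"
  shows "\<exists>p q. s = Fract p q \<and> degree p \<le> 1 \<and> degree q \<le> 1"
proof -
  obtain a b where ab: "s = Fract a b" "b \<noteq> 0" "coprime a b" using coprime_rep by blast
  define t0 :: "'a poly fract" where "t0 = poly_emb [:0,1:]"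
  define S where "S = {n. \<exists>G H. ev G s \<noteq> 0 \<and> t0 * ev G s = ev H s \<and> degree G + degree H = n}"
  have "degree G0 + degree H0 \<in> S" using assms unfolding S_def t0_def by blast
  define d where "d = (LEAST n. n \<in> S)"
  have "d \<in> S" unfolding d_def by (rule LeastI) fact
  then obtain G H where GH: "ev G s \<noteq> 0" "t0 * ev G s = ev H s" "degree G + degree H = d"
    unfolding S_def by blast
  have minimal: "degree G' + degree H' \<ge> d" if "ev G' s \<noteq> 0" "t0 * ev G' s = ev H' s" for G' H'
    using that unfolding d_def S_def by (intro Least_le) blast
  have G0: "G \<noteq> 0" using GH by auto
  have cop: "coprime G H"
  proof (rule coprimeI)
    fix c assume cG: "c dvd G" and cH: "c dvd H"
    show "is_unit c"
    proof (rule ccontr)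
      assume nu: "\<not> is_unit c"
      obtain G' where G': "G = c * G'" using cG by blast
      obtain H' where H': "H = c * H'" using cH by blast
      have c0: "c \<noteq> 0" "G' \<noteq> 0" using G0 G' by auto
      have dc: "degree c > 0" using nu c0 is_unit_iff_degree by blast
      have evc: "ev c s \<noteq> 0" "ev G' s \<noteq> 0" using GH(1) G' by auto
      have "ev c s * (t0 * ev G' s) = ev c s * ev H' s" using GH(2) G' H' by (simp add: algebra_simps)
      then have rel: "t0 * ev G' s = ev H' s" using evc by simp
      have "degree G = degree c + degree G'" using G' c0 by (simp add: degree_mult_eq)
      moreover have "degree H' \<le> degree H"
        using H' c0 by (cases "H' = 0") (simp_all add: degree_mult_eq)
      ultimately have "degree G' + degree H' < d" using GH(3) dc by linarith
      with minimal[OF evc(2) rel] show False by simp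
    qed
  qed
  define N where "N = max (degree G) (degree H)"
  have N1: "N \<ge> 1"
  proof (rule ccontr)
    assume "\<not> N \<ge> 1"
    then have "degree G = 0" "degree H = 0" unfolding N_def by auto
    then obtain g h where gh: "G = [:g:]" "H = [:h:]" by (metis degree_eq_zeroE)
    have 1: "t0 * Cc g = Cc h" using GH(2) gh by simp
    have "poly_emb ([:0,1:] * [:g:]) = poly_emb [:h:]" using 1 unfolding t0_def Cc_def by (simp only: E_mult)
    then have "[:0,1:] * [:g:] = [:h:]" by (simp only: E_inj)
    then have "g = 0" by simp
    with GH(1) gh show False by simp
  qed
  have dGN: "degree G \<le> N" and dHN: "degree H \<le> N" unfolding N_def by auto
  define Gh where "Gh = hom N G a b"
  define Hh where "Hh = hom N H a b"
  have e1: "poly_emb Gh = ev G s * poly_emb b ^ N" unfolding Gh_def ab(1) by (rule hom_ev[OF ab(2) dGN])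
  have e2: "poly_emb Hh = ev H s * poly_emb b ^ N" unfolding Hh_def ab(1) by (rule hom_ev[OF ab(2) dHN])
  have "poly_emb ([:0,1:] * Gh) = poly_emb Hh"
    unfolding E_mult e1 e2 GH(2)[symmetric] t0_def by (simp add: mult.assoc)
  then have rel: "[:0,1:] * Gh = Hh" by (simp only: E_inj)
  obtain U V where UV: "U * G + V * H = 1" using poly_bezout[OF cop] by blast
  define M where "M = max (degree U) (degree V)"
  have "hom M U a b * Gh + hom M V a b * Hh = b ^ (M + N)"
    unfolding Gh_def Hh_def by (rule hom_bezout[OF UV ab(2) dGN dHN]) (auto simp: M_def)
  then have dvdK: "Gh dvd b ^ (M + N)" unfolding rel[symmetric]
    by (metis dvd_add dvd_mult dvd_mult2 dvd_refl)
  obtain \<alpha> \<beta> where ab_bez: "\<alpha> * a + \<beta> * b = 1" using poly_bezout[OF ab(3)] by blast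
  then have "\<beta> * b + \<alpha> * a = 1" by (simp add: add.commute)
  then obtain Y where Y: "(\<alpha> * a) ^ N + b * Y = 1" using pw_lemma by blast
  have NGH: "coeff G N \<noteq> 0 \<or> coeff H N \<noteq> 0"
  proof (cases "H \<noteq> 0 \<and> degree G \<le> degree H")
    case True
    then have "N = degree H" unfolding N_def by simp
    then show ?thesis using True by (metis leading_coeff_0_iff)
  next
    case False
    then have "N = degree G" unfolding N_def by auto
    then show ?thesis using G0 by (metis leading_coeff_0_iff)
  qed
  have step: "Gh dvd b ^ j" if "Gh dvd b ^ Suc j" for j
  proof -
    obtain QG where QG: "Gh - smult (coeff G N) (a ^ N) = b * QG"
      using hom_split[of b N G a] unfolding Gh_def by blast
    obtain QH where QH: "Hh - smult (coeff H N) (a ^ N) = b * QH"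
      using hom_split[of b N H a] unfolding Hh_def by blast
    have GhH: "Gh dvd Hh" using rel by (metis dvd_triv_right)
    have "smult (coeff G N) (a ^ N * b ^ j) = Gh * b ^ j - b ^ Suc j * QG"
      using QG by (simp add: algebra_simps eq_diff_eq)
    then have d1: "Gh dvd smult (coeff G N) (a ^ N * b ^ j)"
      using that by (metis dvd_diff dvd_mult2 dvd_refl dvd_mult_left)
    have "smult (coeff H N) (a ^ N * b ^ j) = Hh * b ^ j - b ^ Suc j * QH"
      using QH by (simp add: algebra_simps eq_diff_eq)
    then have d2: "Gh dvd smult (coeff H N) (a ^ N * b ^ j)"
      using that GhH by (metis dvd_diff dvd_mult2 dvd_mult_left)
    have d3: "Gh dvd a ^ N * b ^ j" using NGH d1 d2 dvd_smult_cancel by blast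
    have "b ^ j = \<alpha> ^ N * (a ^ N * b ^ j) + Y * b ^ Suc j"
    proof -
      have "b ^ j = b ^ j * ((\<alpha> * a) ^ N + b * Y)" using Y by simp
      also have "\<dots> = \<alpha> ^ N * (a ^ N * b ^ j) + Y * b ^ Suc j"
        by (simp add: algebra_simps power_mult_distrib)
      finally show ?thesis .
    qed
    then show ?thesis using d3 that by (metis dvd_add dvd_mult)
  qed
  have "Gh dvd b ^ (M + N - k)" if "k \<le> M + N" for k
    using that
  proof (induct k)
    case 0 then show ?case using dvdK by simp
  next
    case (Suc k)
    then have "Gh dvd b ^ (M + N - k)" by simp
    moreover have "M + N - k = Suc (M + N - Suc k)" using Suc by simp
    ultimately show ?case using step by metis
  qed
  from this[of "M + N"] have "is_unit Gh" by simp
  then have Gh00: "Gh \<noteq> 0" by auto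
  have Gh0: "Gh \<noteq> 0" "degree Gh = 0" using is_unit_iff_degree[OF Gh00] \<open>is_unit Gh\<close> Gh00 by auto
  have dG: "degree Gh \<le> 1" using Gh0 by simp
  have dH: "degree Hh \<le> 1" using Gh0 rel[symmetric] by (simp add: degree_mult_eq)
  have "degree a \<le> 1 \<and> degree b \<le> 1"
    using deg_lemma[OF ab(3) ab(2) cop N_def N1] dG dH unfolding Gh_def Hh_def by blast
  then show ?thesis using ab(1) by blast
qed

lemma unity_const:
  fixes z :: "'a::field poly fract"
  assumes "z ^ k = 1" "k \<ge> 1"
  shows "\<exists>c. z = Cc c"
proof -
  obtain a b where ab: "z = Fract a b" "b \<noteq> 0" "coprime a b" using coprime_rep by blast
  have "poly_emb (a ^ k) / poly_emb (b ^ k) = 1"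
    using assms(1) ab by (simp add: Fract_div power_divide)
  then have "poly_emb (a ^ k) = poly_emb (b ^ k)" using ab(2) by (simp add: divide_eq_1_iff)
  then have akbk: "a ^ k = b ^ k" by (simp only: E_inj)
  obtain \<alpha> \<beta> where bez: "\<alpha> * a + \<beta> * b = 1" using poly_bezout[OF ab(3)] by blast
  obtain Y where Y: "(\<beta> * b) ^ k + a * Y = 1" using pw_lemma[OF bez] by blast
  have "a dvd a ^ k" using assms(2) by (simp add: dvd_power)
  then have "a dvd (\<beta> * b) ^ k + a * Y" unfolding power_mult_distrib akbk[symmetric]
    by (simp add: dvd_add)
  then have ua: "is_unit a" using Y by simp
  have bez2: "\<beta> * b + \<alpha> * a = 1" using bez by (simp add: add.commute)
  obtain Y2 where Y2: "(\<alpha> * a) ^ k + b * Y2 = 1" using pw_lemma[OF bez2] by blast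
  have "b dvd b ^ k" using assms(2) by (simp add: dvd_power)
  then have "b dvd (\<alpha> * a) ^ k + b * Y2" unfolding power_mult_distrib akbk
    by (simp add: dvd_add)
  then have ub: "is_unit b" using Y2 by simp
  obtain c1 where c1: "a = [:c1:]" using ua is_unit_poly_iff by blast
  obtain c2 where c2: "b = [:c2:]" using ub is_unit_poly_iff by blast
  have "c2 \<noteq> 0" using ab(2) c2 by simp
  have "z = Cc c1 / Cc c2" using ab(1,2) c1 c2 by (simp add: Fract_div Cc_def)
  also have "\<dots> = Cc (c1 * inverse c2)" by (simp add: Cc_inverse divide_inverse)
  finally show ?thesis by blast
qed

lemma finite_order:
  fixes c :: "'a::{field,finite}"
  assumes "c \<noteq> 0"
  shows "\<exists>k\<ge>1. c ^ k = 1"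
proof -
  have "\<not> inj (\<lambda>n::nat. c ^ n)"
  proof
    assume "inj (\<lambda>n::nat. c ^ n)"
    moreover have "finite (range (\<lambda>n::nat. c ^ n))" by simp
    ultimately have "finite (UNIV :: nat set)" using finite_imageD by blast
    then show False by simp
  qed
  then obtain i j :: nat where ij: "i \<noteq> j" "c ^ i = c ^ j" unfolding inj_def by blast
  show ?thesis
  proof (cases "i < j")
    case True
    have "c ^ i * c ^ (j - i) = c ^ j" using True by (simp flip: power_add)
    then have "c ^ i * c ^ (j - i) = c ^ i * 1" using ij(2) by simp
    then have "c ^ (j - i) = 1" using assms by simp
    then show ?thesis using True by (intro exI[of _ "j - i"]) simp
  next
    case False
    then have "j < i" using ij by simp
    have "c ^ j * c ^ (i - j) = c ^ i" using \<open>j < i\<close> by (simp flip: power_add)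
    then have "c ^ j * c ^ (i - j) = c ^ j * 1" using ij(2) by simp
    then have "c ^ (i - j) = 1" using assms by simp
    then show ?thesis using \<open>j < i\<close> by (intro exI[of _ "i - j"]) simp
  qed
qed

definition RR :: "'a::field poly \<Rightarrow> 'a poly fract set" where
  "RR D = {Fract p (D ^ n) | p n. True}"

context
  fixes D :: "'a::field poly"
  assumes D0: "D \<noteq> 0"
begin

lemma RR_E: "poly_emb p \<in> RR D"
  unfolding RR_def poly_emb_def by (rule CollectI, rule exI[of _ p], rule exI[of _ 0]) simp

lemma RR_add: "x \<in> RR D \<Longrightarrow> y \<in> RR D \<Longrightarrow> x + y \<in> RR D"
  unfolding RR_def using D0
  by (auto, rule_tac x="p * D ^ na + pa * D ^ n" in exI, rule_tac x="n + na" in exI, simp add: power_add)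

lemma RR_mult: "x \<in> RR D \<Longrightarrow> y \<in> RR D \<Longrightarrow> x * y \<in> RR D"
  unfolding RR_def using D0
  by (auto, rule_tac x="p * pa" in exI, rule_tac x="n + na" in exI, simp add: power_add)

lemma RR_minus: "x \<in> RR D \<Longrightarrow> - x \<in> RR D"
  unfolding RR_def by (auto, rule_tac x="-p" in exI, rule_tac x=n in exI, simp)

lemma RR_0: "0 \<in> RR D" using RR_E[of 0] by simp
lemma RR_1: "1 \<in> RR D" using RR_E[of 1] by simp
lemma RR_Cc: "Cc c \<in> RR D" unfolding Cc_def by (rule RR_E)
lemma RR_diff: "x \<in> RR D \<Longrightarrow> y \<in> RR D \<Longrightarrow> x - y \<in> RR D"
  using RR_add RR_minus by (metis diff_conv_add_uminus)
lemma RR_power: "x \<in> RR D \<Longrightarrow> x ^ n \<in> RR D"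
  by (induct n) (auto intro: RR_mult RR_1)

lemma RR_prod: "finite A \<Longrightarrow> (\<And>z. z \<in> A \<Longrightarrow> f z \<in> RR D) \<Longrightarrow> prod f A \<in> RR D"
  by (induct A rule: finite_induct) (auto intro: RR_mult RR_1)

lemma RR_ev: "x \<in> RR D \<Longrightarrow> ev P x \<in> RR D"
  by (induct P) (auto intro: RR_add RR_mult RR_Cc RR_0)

lemma transc:
  assumes "x \<in> RR D" "x \<noteq> 0" "\<not> unit_in (RR D) x"
  shows "transcendental_Fq x"
proof -
  have fold: "(\<lambda>c. poly_emb [:c:]) = Cc" by (rule ext) (simp add: Cc_def)
  have "p \<noteq> 0 \<longrightarrow> ev p x \<noteq> 0" for p
  proof (induct p)
    case 0 then show ?case by simp
  next
    case (pCons a p)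
    show ?case
    proof (cases "a = 0")
      case True
      then show ?thesis using pCons assms(2) by auto
    next
      case False
      show ?thesis
      proof
        assume "pCons a p \<noteq> 0"
        show "ev (pCons a p) x \<noteq> 0"
        proof
          assume "ev (pCons a p) x = 0"
          then have h: "x * ev p x = - Cc a" by (simp add: eq_neg_iff_add_eq_0 add.commute)
          have "x * (- ev p x * Cc (inverse a)) = - (x * ev p x) * Cc (inverse a)"
            by (simp add: algebra_simps)
          also have "\<dots> = Cc a * Cc (inverse a)" using h by simp
          also have "\<dots> = 1" using False by (simp flip: Cc_mult)
          finally have "x * (- ev p x * Cc (inverse a)) = 1" .
          moreover have "- ev p x * Cc (inverse a) \<in> RR D"
            using assms(1) by (intro RR_mult RR_minus RR_ev RR_Cc)
          ultimately have "unit_in (RR D) x" unfolding unit_in_def by blast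
          with assms(3) show False by simp
        qed
      qed
    qed
  qed
  then show ?thesis unfolding transcendental_Fq_def fold ev_def[symmetric] by blast
qed

end

lemma E_pCons: "poly_emb (pCons a p) = Cc a + poly_emb [:0,1:] * poly_emb p"
proof -
  have "pCons a p = [:a:] + [:0,1:] * p" by simp
  then have "poly_emb (pCons a p) = poly_emb ([:a:] + [:0,1:] * p)" by (rule arg_cong)
  also have "\<dots> = Cc a + poly_emb [:0,1:] * poly_emb p" by (simp only: E_add E_mult Cc_def)
  finally show ?thesis .
qed

lemma finite_deg1: "finite {p :: 'a::{finite,zero} poly. degree p \<le> 1}"
proof (rule finite_subset)
  show "{p :: 'a poly. degree p \<le> 1} \<subseteq> (\<lambda>(u, v). [:u, v:]) ` UNIV"
  proof
    fix p :: "'a poly" assume "p \<in> {p. degree p \<le> 1}"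
    then have "degree p \<le> 1" by simp
    then have "p = [:coeff p 0, coeff p 1:]"
      by (intro poly_eqI) (auto simp: coeff_pCons coeff_eq_0 split: nat.split)
    then show "p \<in> (\<lambda>(u, v). [:u, v:]) ` UNIV" by (intro image_eqI[of _ _ "(coeff p 0, coeff p 1)"]) auto
  qed
qed simp

definition S0 :: "'a::field poly fract set" where
  "S0 = {Fract p q | p q. degree p \<le> 1 \<and> degree q \<le> 1}"

lemma finite_S0: "finite (S0 :: 'a::{field,finite} poly fract set)"
proof -
  have "S0 = (\<lambda>(p, q). Fract p q) ` ({p :: 'a poly. degree p \<le> 1} \<times> {q. degree q \<le> 1})"
    unfolding S0_def by auto
  moreover have "finite ((\<lambda>(p, q). Fract p q) ` ({p :: 'a poly. degree p \<le> 1} \<times> {q. degree q \<le> 1}))"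
    by (intro finite_imageI finite_cartesian_product finite_deg1)
  ultimately show ?thesis by simp
qed

context
  fixes D :: "'a::{field,finite} poly" and \<sigma> :: "'a poly fract \<Rightarrow> 'a poly fract"
  assumes D0: "D \<noteq> 0" and aut: "ring_aut_on (RR D) \<sigma>"
begin

lemma aut_bij: "bij_betw \<sigma> (RR D) (RR D)" using aut unfolding ring_aut_on_def by blast
lemma aut_in: "x \<in> RR D \<Longrightarrow> \<sigma> x \<in> RR D" using aut_bij by (rule bij_betw_apply)
lemma aut_add: "x \<in> RR D \<Longrightarrow> y \<in> RR D \<Longrightarrow> \<sigma> (x + y) = \<sigma> x + \<sigma> y"
  using aut unfolding ring_aut_on_def by blast
lemma aut_mult: "x \<in> RR D \<Longrightarrow> y \<in> RR D \<Longrightarrow> \<sigma> (x * y) = \<sigma> x * \<sigma> y"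
  using aut unfolding ring_aut_on_def by blast
lemma aut_1: "\<sigma> 1 = 1" using aut unfolding ring_aut_on_def by blast
lemma aut_0: "\<sigma> 0 = 0"
proof -
  have h: "\<sigma> (0 + 0) = \<sigma> 0 + \<sigma> 0" using aut_add RR_0[OF D0] by blast
  then show ?thesis by (simp only: add_0_right add_cancel_right_right)
qed
lemma aut_inj: "x \<in> RR D \<Longrightarrow> y \<in> RR D \<Longrightarrow> \<sigma> x = \<sigma> y \<Longrightarrow> x = y"
  using aut_bij unfolding bij_betw_def inj_on_def by blast
lemma aut_surj: "y \<in> RR D \<Longrightarrow> \<exists>x\<in>RR D. \<sigma> x = y"
proof -
  assume "y \<in> RR D"
  then have "y \<in> \<sigma> ` RR D" using aut_bij unfolding bij_betw_def by simp
  then show ?thesis by (auto simp: image_iff)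
qed
lemma aut_power: "x \<in> RR D \<Longrightarrow> \<sigma> (x ^ n) = \<sigma> x ^ n"
  by (induct n) (simp_all add: aut_1 aut_mult RR_power[OF D0])
lemma aut_prod: "finite A \<Longrightarrow> (\<And>z. z \<in> A \<Longrightarrow> f z \<in> RR D) \<Longrightarrow> \<sigma> (prod f A) = (\<Prod>z\<in>A. \<sigma> (f z))"
  by (induct A rule: finite_induct) (simp_all add: aut_1 aut_mult RR_prod[OF D0])

lemma aut_const: "\<exists>c'. \<sigma> (Cc c) = Cc c'"
proof (cases "c = 0")
  case True then show ?thesis using aut_0 by (intro exI[of _ 0]) simp
next
  case False
  then obtain k where k: "k \<ge> 1" "c ^ k = 1" using finite_order by blast
  have "\<sigma> (Cc c) ^ k = \<sigma> (Cc c ^ k)" using aut_power RR_Cc[OF D0] by simp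
  also have "\<dots> = 1" using k aut_1 by (simp flip: Cc_power)
  finally show ?thesis using unity_const k(1) by blast
qed

definition phi :: "'a \<Rightarrow> 'a" where "phi c = (SOME c'. \<sigma> (Cc c) = Cc c')"

lemma phi: "\<sigma> (Cc c) = Cc (phi c)"
  unfolding phi_def using aut_const by (rule someI_ex)

lemma phi0: "phi 0 = 0"
  using phi[of 0] aut_0 by simp

lemma aut_poly: "\<sigma> (poly_emb g) = ev (map_poly phi g) (\<sigma> (poly_emb [:0,1:]))"
proof (induct g)
  case 0 then show ?case using aut_0 by simp
next
  case (pCons a p)
  have "\<sigma> (poly_emb (pCons a p)) = \<sigma> (Cc a + poly_emb [:0,1:] * poly_emb p)"
    by (rule arg_cong[where f=\<sigma>], rule E_pCons)
  also have "\<dots> = \<sigma> (Cc a) + \<sigma> (poly_emb [:0,1:] * poly_emb p)"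
    by (rule aut_add) (intro RR_Cc RR_mult RR_E D0)+
  also have "\<dots> = \<sigma> (Cc a) + \<sigma> (poly_emb [:0,1:]) * \<sigma> (poly_emb p)"
    by (simp only: aut_mult[OF RR_E[OF D0] RR_E[OF D0]])
  also have "\<dots> = Cc (phi a) + \<sigma> (poly_emb [:0,1:]) * ev (map_poly phi p) (\<sigma> (poly_emb [:0,1:]))"
    by (simp only: phi pCons(2))
  also have "\<dots> = ev (map_poly phi (pCons a p)) (\<sigma> (poly_emb [:0,1:]))"
    by (simp add: map_poly_pCons phi0)
  finally show ?case .
qed

lemma aut_t0_S0: "\<sigma> (poly_emb [:0,1:]) \<in> S0"
proof -
  define t0 :: "'a poly fract" where "t0 = poly_emb [:0,1:]"
  obtain w where w: "w \<in> RR D" "\<sigma> w = t0" using aut_surj RR_E[OF D0] unfolding t0_def by blast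
  then obtain g n where g: "w = Fract g (D ^ n)" unfolding RR_def by blast
  have eq: "w * poly_emb (D ^ n) = poly_emb g"
    using D0 g by (simp add: poly_emb_def eq_fract)
  have "\<sigma> w * \<sigma> (poly_emb (D ^ n)) = \<sigma> (poly_emb g)"
    using arg_cong[OF eq, of \<sigma>] aut_mult[OF w(1) RR_E[OF D0], of "D^n"] by simp
  then have rel: "t0 * ev (map_poly phi (D ^ n)) (\<sigma> t0) = ev (map_poly phi g) (\<sigma> t0)"
    using w(2) unfolding aut_poly[of "D ^ n"] aut_poly[of g] t0_def by simp
  have "\<sigma> (poly_emb (D ^ n)) \<noteq> 0"
  proof
    assume "\<sigma> (poly_emb (D ^ n)) = 0"
    then have "\<sigma> (poly_emb (D ^ n)) = \<sigma> 0" using aut_0 by simp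
    then have "poly_emb (D ^ n) = 0" using aut_inj RR_E[OF D0] RR_0[OF D0] by blast
    then show False using D0 by simp
  qed
  then have "ev (map_poly phi (D ^ n)) (\<sigma> t0) \<noteq> 0" unfolding aut_poly[of "D ^ n"] t0_def .
  from key_lemma[OF this[unfolded t0_def] rel[unfolded t0_def]] show ?thesis
    unfolding S0_def t0_def by blast
qed

lemma aut_orbit: "\<sigma> (poly_emb y) \<in> (\<lambda>(f, z). ev (map_poly f y) z) ` (UNIV \<times> S0)"
proof (rule image_eqI[of _ _ "(phi, \<sigma> (poly_emb [:0,1:]))"])
  show "\<sigma> (poly_emb y) = (\<lambda>(f, z). ev (map_poly f y) z) (phi, \<sigma> (poly_emb [:0,1:]))"
    unfolding prod.case by (rule aut_poly)
  show "(phi, \<sigma> (poly_emb [:0,1:])) \<in> UNIV \<times> S0" using aut_t0_S0 by simp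
qed

end

lemma aut_comp:
  assumes "ring_aut_on S \<sigma>" "ring_aut_on S \<tau>"
  shows "ring_aut_on S (\<sigma> \<circ> \<tau>)"
proof -
  have b: "bij_betw \<sigma> S S" "bij_betw \<tau> S S" using assms unfolding ring_aut_on_def by auto
  have in\<tau>: "\<tau> a \<in> S" if "a \<in> S" for a using b(2) that by (rule bij_betw_apply)
  show ?thesis unfolding ring_aut_on_def
  proof (intro conjI ballI)
    show "bij_betw (\<sigma> \<circ> \<tau>) S S" by (rule bij_betw_trans[OF b(2) b(1)])
    show "(\<sigma> \<circ> \<tau>) 1 = 1" using assms unfolding ring_aut_on_def by simp
    fix a b assume ab: "a \<in> S" "b \<in> S"
    show "(\<sigma> \<circ> \<tau>) (a + b) = (\<sigma> \<circ> \<tau>) a + (\<sigma> \<circ> \<tau>) b"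
      using assms ab in\<tau> unfolding ring_aut_on_def by simp
    show "(\<sigma> \<circ> \<tau>) (a * b) = (\<sigma> \<circ> \<tau>) a * (\<sigma> \<circ> \<tau>) b"
      using assms ab in\<tau> unfolding ring_aut_on_def by simp
  qed
qed

lemma aut_inv:
  assumes D0: "D \<noteq> 0" and aut: "ring_aut_on (RR D) \<sigma>"
  shows "ring_aut_on (RR D) (inv_into (RR D) \<sigma>)"
proof -
  let ?S = "RR D" and ?i = "inv_into (RR D) \<sigma>"
  have b: "bij_betw \<sigma> ?S ?S" using aut unfolding ring_aut_on_def by auto
  have bi: "bij_betw ?i ?S ?S" using b by (rule bij_betw_inv_into)
  have inj: "inj_on \<sigma> ?S" using b by (simp add: bij_betw_def)
  have surj: "\<sigma> ` ?S = ?S" using b by (simp add: bij_betw_def)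
  have iin: "?i a \<in> ?S" if "a \<in> ?S" for a using bi that by (rule bij_betw_apply)
  have fi: "\<sigma> (?i a) = a" if "a \<in> ?S" for a using that surj by (simp add: f_inv_into_f)
  show ?thesis unfolding ring_aut_on_def
  proof (intro conjI ballI)
    show "bij_betw ?i ?S ?S" by (rule bi)
    show "?i 1 = 1" using aut inj RR_1[OF D0] unfolding ring_aut_on_def
      by (metis inv_into_f_f)
    fix a b assume ab: "a \<in> ?S" "b \<in> ?S"
    have "\<sigma> (?i a + ?i b) = a + b" using aut ab iin fi unfolding ring_aut_on_def by simp
    then show "?i (a + b) = ?i a + ?i b"
      using inj ab iin RR_add[OF D0] by (metis inv_into_f_f)
    have "\<sigma> (?i a * ?i b) = a * b" using aut ab iin fi unfolding ring_aut_on_def by simp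
    then show "?i (a * b) = ?i a * ?i b"
      using inj ab iin RR_mult[OF D0] by (metis inv_into_f_f)
  qed
qed

lemma y_nonunit:
  fixes D :: "'a::field poly"
  assumes D0: "D \<noteq> 0"
  shows "\<not> unit_in (RR D) (poly_emb ([:0,1:] * D + 1))"
proof
  define y where "y = [:0,1:] * D + 1"
  assume "unit_in (RR D) (poly_emb ([:0,1:] * D + 1))"
  then obtain v where v: "v \<in> RR D" "poly_emb y * v = 1" unfolding unit_in_def y_def by blast
  then obtain p n where vp: "v = Fract p (D ^ n)" unfolding RR_def by blast
  have "Fract (y * p) (D ^ n) = Fract 1 1" using v(2) vp by (simp add: poly_emb_def fract_collapse)
  then have yp: "y * p = D ^ n" using D0 by (simp add: eq_fract)
  have "1 * y + (- [:0,1:]) * D = 1" unfolding y_def by simp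
  then obtain Y where Y: "(- [:0,1:] * D) ^ n + y * Y = 1" using pw_lemma by blast
  have "(- [:0,1:] * D) ^ n = (- [:0,1:]) ^ n * (y * p)" by (simp only: power_mult_distrib yp)
  then have "y dvd 1" using Y by (metis dvd_add dvd_mult dvd_mult2 dvd_refl)
  moreover have "y \<noteq> 0" "degree y > 0"
  proof -
    have d: "degree ([:0,1:] * D) = Suc (degree D)" using D0 by (simp add: degree_mult_eq)
    then have "degree y = Suc (degree D)" unfolding y_def by (subst degree_add_eq_left) simp_all
    then show "y \<noteq> 0" "degree y > 0" by auto
  qed
  ultimately show False using is_unit_iff_degree[of y] by simp
qed

theorem mainTheorem8:
  fixes f :: "nat \<Rightarrow> 'a::{field,finite} poly" and m :: nat
    and R :: "'a poly fract set"
  assumes "m \<ge> 1"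
    and "\<And>i. i < m \<Longrightarrow> lead_coeff (f i) = 1 \<and> irreducible (f i)"
    and "\<And>i j. i < m \<Longrightarrow> j < m \<Longrightarrow> i \<noteq> j \<Longrightarrow> coprime (f i) (f j)"
    and "R = poly_ring \<or> R = loc_ring f m"
  shows "\<exists>x\<in>R. \<not> unit_in R x \<and> transcendental_Fq x \<and>
           (\<forall>\<sigma>. ring_aut_on R \<sigma> \<longrightarrow> \<sigma> x = x)"
proof -
  define D where "D = (if R = poly_ring then 1 else (\<Prod>i<m. f i))"
  have fi0: "f i \<noteq> 0" if "i < m" for i using assms(2)[OF that] by (auto simp: irreducible_def)
  have D0: "D \<noteq> 0" unfolding D_def using fi0 by auto
  have RD: "R = RR D"
  proof (cases "R = poly_ring")
    case True
    have "poly_ring = RR (1 :: 'a poly)" unfolding poly_ring_def RR_def poly_emb_def by auto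
    then show ?thesis using True unfolding D_def by simp
  next
    case False
    then have "R = loc_ring f m" using assms(4) by simp
    then show ?thesis using False unfolding D_def loc_ring_def RR_def by simp
  qed
  define y where "y = [:0,1:] * D + 1"
  define y0 where "y0 = poly_emb y"
  define A where "A = {\<sigma>. ring_aut_on (RR D) \<sigma>}"
  define Orb where "Orb = (\<lambda>\<sigma>. \<sigma> y0) ` A"
  define x where "x = (\<Prod>z\<in>Orb. z)"
  have idA: "id \<in> A" unfolding A_def ring_aut_on_def by simp
  then have y0O: "y0 \<in> Orb" unfolding Orb_def by (intro image_eqI[of _ _ id]) simp_all
  have y0R: "y0 \<in> RR D" unfolding y0_def by (rule RR_E[OF D0])
  have OR: "Orb \<subseteq> RR D" unfolding Orb_def A_def using aut_in[OF D0] y0R by blast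
  have "Orb \<subseteq> (\<lambda>(f, z). ev (map_poly f y) z) ` (UNIV \<times> S0)"
    unfolding Orb_def A_def y0_def using aut_orbit[OF D0] by blast
  moreover have "finite ((\<lambda>(f, z). ev (map_poly f y) z) ` ((UNIV :: ('a \<Rightarrow> 'a) set) \<times> S0))"
    by (intro finite_imageI finite_cartesian_product finite_S0) simp
  ultimately have finO: "finite Orb" by (rule finite_subset)
  have y0nu: "\<not> unit_in (RR D) y0" unfolding y0_def y_def by (rule y_nonunit[OF D0])
  have "degree y = Suc (degree D)" unfolding y_def using D0
    by (subst degree_add_eq_left) (simp_all add: degree_mult_eq)
  then have y00: "y0 \<noteq> 0" unfolding y0_def by auto
  have O0: "z \<noteq> 0" if zO: "z \<in> Orb" for z
  proof -
    obtain \<tau> where \<tau>: "ring_aut_on (RR D) \<tau>" "z = \<tau> y0" using zO unfolding Orb_def A_def by blast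
    show ?thesis
    proof
      assume "z = 0"
      then have "\<tau> y0 = \<tau> 0" using aut_0[OF D0 \<tau>(1)] \<tau>(2) by simp
      then have "y0 = 0" using aut_inj[OF D0 \<tau>(1) y0R RR_0[OF D0]] by simp
      with y00 show False by simp
    qed
  qed
  have xR: "x \<in> RR D" unfolding x_def using finO OR by (intro RR_prod[OF D0]) auto
  have x0: "x \<noteq> 0" unfolding x_def using finO O0 by simp
  have xnu: "\<not> unit_in (RR D) x"
  proof
    assume "unit_in (RR D) x"
    then obtain v where v: "v \<in> RR D" "x * v = 1" unfolding unit_in_def by blast
    have "x = y0 * (\<Prod>z\<in>Orb - {y0}. z)" unfolding x_def using finO y0O by (rule prod.remove)
    then have "y0 * ((\<Prod>z\<in>Orb - {y0}. z) * v) = 1" using v(2) by (simp add: mult.assoc)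
    moreover have "(\<Prod>z\<in>Orb - {y0}. z) * v \<in> RR D"
      using finO OR v(1) by (intro RR_mult[OF D0] RR_prod[OF D0]) auto
    ultimately have "unit_in (RR D) y0" unfolding unit_in_def by blast
    with y0nu show False by simp
  qed
  have tr: "transcendental_Fq x" by (rule transc[OF D0 xR x0 xnu])
  have fixd: "\<sigma> x = x" if \<sigma>: "ring_aut_on (RR D) \<sigma>" for \<sigma>
  proof -
    have img: "\<sigma> ` Orb = Orb"
    proof
      show "\<sigma> ` Orb \<subseteq> Orb"
      proof
        fix z assume "z \<in> \<sigma> ` Orb"
        then obtain \<tau> where "\<tau> \<in> A" "z = \<sigma> (\<tau> y0)" unfolding Orb_def by blast
        then have "z = (\<sigma> \<circ> \<tau>) y0" "\<sigma> \<circ> \<tau> \<in> A" using aut_comp[OF \<sigma>] unfolding A_def by auto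
        then show "z \<in> Orb" unfolding Orb_def by blast
      qed
      show "Orb \<subseteq> \<sigma> ` Orb"
      proof
        fix z assume zO: "z \<in> Orb"
        then obtain \<tau> where \<tau>: "\<tau> \<in> A" "z = \<tau> y0" unfolding Orb_def by blast
        let ?i = "inv_into (RR D) \<sigma>"
        have "?i \<circ> \<tau> \<in> A" using aut_comp[OF aut_inv[OF D0 \<sigma>]] \<tau>(1) unfolding A_def by auto
        then have "(?i \<circ> \<tau>) y0 \<in> Orb" unfolding Orb_def by blast
        moreover have "\<sigma> ((?i \<circ> \<tau>) y0) = z"
        proof -
          have "z \<in> RR D" using zO OR by blast
          moreover have "\<sigma> ` RR D = RR D" using \<sigma> unfolding ring_aut_on_def bij_betw_def by blast
          ultimately show ?thesis using \<tau>(2) by (simp add: f_inv_into_f)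
        qed
        ultimately show "z \<in> \<sigma> ` Orb" by force
      qed
    qed
    have inj: "inj_on \<sigma> Orb"
      using \<sigma> OR unfolding ring_aut_on_def bij_betw_def by (meson inj_on_subset)
    have "\<sigma> x = (\<Prod>z\<in>Orb. \<sigma> z)" unfolding x_def using aut_prod[OF D0 \<sigma> finO, of "\<lambda>z. z"] OR by auto
    also have "\<dots> = (\<Prod>z\<in>\<sigma> ` Orb. z)" using prod.reindex[OF inj, of "\<lambda>z. z"] by simp
    also have "\<dots> = x" unfolding img x_def ..
    finally show ?thesis .
  qed
  show ?thesis unfolding RD using xR xnu tr fixd by blast
qed

end
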